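(* Let $V$ be a vertex algebra. The following are equivalent: (1) there exists a $V$-module $W$ with $g(V)_{\ge0}W\ne W$; (2) $g(V)_{\ge0}V\ne V$; (3) $\mathbf 1\notin g(V)_{\ge0}V$.
   Context: $(V,Y,\mathbf 1)$ is a vertex algebra; a $V$-module is a module for $V$ as a vertex algebra (no grading assumed). For a $V$-module $W$, $g(V)_{\ge0}W=\mathrm{span}\{v_nw\mid v\in V,\ n\ge0,\ w\in W\}$, where $Y_W(v,x)=\sum_nv_nx^{-n-1}$; $V$ is regarded as a module over itself. *)

theory Defs
  imports Complex_Main "HOL-Library.Groups_Big_Fun"
begin

text \<open>A vertex operator map is encoded by its modes: Y u n v = u_n v, where
  Y(u,x) = sum_n u_n x^(-n-1).  Binomial coefficients with integer upper entry
  are the generalized binomials (m gchoose i), computed in rat (they are integers).\<close>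

definition ibinom :: "int \<Rightarrow> nat \<Rightarrow> int" where
  "ibinom m i = floor ((of_int m :: rat) gchoose i)"

text \<open>All sums have finite support by the truncation property.\<close>

definition jacobi_identity ::
  "('k::field \<Rightarrow> 'w::ab_group_add \<Rightarrow> 'w) \<Rightarrow> ('v \<Rightarrow> int \<Rightarrow> 'v \<Rightarrow> 'v)
   \<Rightarrow> ('v \<Rightarrow> int \<Rightarrow> 'w \<Rightarrow> 'w) \<Rightarrow> bool" where
  "jacobi_identity sW YV YW \<longleftrightarrow>
    (\<forall>u v w m n l.
      Sum_any (\<lambda>i::nat. sW (of_int (ibinom m i)) (YW (YV u (l + int i) v) (m + n - int i) w))
      = Sum_any (\<lambda>i::nat. sW (of_int ((-1) ^ i * ibinom l i))
            (YW u (m + l - int i) (YW v (n + int i) w)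
             - sW (if even l then 1 else -1) (YW v (n + l - int i) (YW u (m + int i) w)))))"

definition vertex_algebra ::
  "('k::field \<Rightarrow> 'v::ab_group_add \<Rightarrow> 'v) \<Rightarrow> ('v \<Rightarrow> int \<Rightarrow> 'v \<Rightarrow> 'v) \<Rightarrow> 'v \<Rightarrow> bool" where
  "vertex_algebra sV Y vac \<longleftrightarrow>
     vector_space sV
   \<and> (\<forall>u n. Vector_Spaces.linear sV sV (Y u n))
   \<and> (\<forall>n v. Vector_Spaces.linear sV sV (\<lambda>u. Y u n v))
   \<and> (\<forall>u v. \<exists>N. \<forall>n\<ge>N. Y u n v = 0)
   \<and> (\<forall>n v. Y vac n v = (if n = -1 then v else 0))
   \<and> (\<forall>u. (\<forall>n\<ge>0. Y u n vac = 0) \<and> Y u (-1) vac = u)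
   \<and> jacobi_identity sV Y Y"

definition va_module ::
  "('k::field \<Rightarrow> 'v::ab_group_add \<Rightarrow> 'v) \<Rightarrow> ('v \<Rightarrow> int \<Rightarrow> 'v \<Rightarrow> 'v) \<Rightarrow> 'v
   \<Rightarrow> ('k \<Rightarrow> 'w::ab_group_add \<Rightarrow> 'w) \<Rightarrow> ('v \<Rightarrow> int \<Rightarrow> 'w \<Rightarrow> 'w) \<Rightarrow> bool" where
  "va_module sV Y vac sW YW \<longleftrightarrow>
     vector_space sW
   \<and> (\<forall>u n. Vector_Spaces.linear sW sW (YW u n))
   \<and> (\<forall>n w. Vector_Spaces.linear sV sW (\<lambda>u. YW u n w))
   \<and> (\<forall>u w. \<exists>N. \<forall>n\<ge>N. YW u n w = 0)
   \<and> (\<forall>n w. YW vac n w = (if n = -1 then w else 0))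
   \<and> jacobi_identity sW Y YW"

definition gpos :: "('k::field \<Rightarrow> 'w::ab_group_add \<Rightarrow> 'w) \<Rightarrow> ('v \<Rightarrow> int \<Rightarrow> 'w \<Rightarrow> 'w) \<Rightarrow> 'w set" where
  "gpos sW YW = module.span sW {YW v n w | v n w. 0 \<le> n}"

end

theory Submission
  imports Defs
begin

lemma lin_facts:
  assumes "Vector_Spaces.linear s1 s2 f"
  shows "f 0 = 0" "f (x + y) = f x + f y" "f (s1 c x) = s2 c (f x)"
proof -
  have a: "\<forall>x y. f (x + y) = f x + f y" and s: "\<forall>c x. f (s1 c x) = s2 c (f x)"
    using assms unfolding Vector_Spaces.linear_iff by auto
  show "f (x + y) = f x + f y" "f (s1 c x) = s2 c (f x)" using a s by auto
  have "f (0 + 0) = f 0 + f 0" using a by blast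
  then show "f 0 = 0" by simp
qed

lemma vs_zero:
  assumes "vector_space s"
  shows "s c 0 = 0" "s 0 x = 0" "s 1 x = x"
proof -
  interpret module s using assms by (simp add: module_iff_vector_space)
  show "s c 0 = 0" "s 0 x = 0" "s 1 x = x" by auto
qed

lemma Sum_any_in_span:
  assumes "vector_space s" and "\<And>i. g i \<in> module.span s S"
  shows "Sum_any g \<in> module.span s S"
proof -
  interpret module s using assms by (simp add: module_iff_vector_space)
  show ?thesis unfolding Sum_any.expand_set by (rule span_sum) (use assms in auto)
qed

lemma ibinom_0[simp]: "ibinom m 0 = 1"
  by (simp add: ibinom_def)

lemma ibinom_big:
  assumes "0 \<le> n" "n < int i"
  shows "ibinom n i = 0"
proof -
  have e1: "(of_int n :: rat) = of_nat (nat n)" using assms by simp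
  have e2: "(of_nat (nat n) :: rat) gchoose i = of_nat (nat n choose i)"
    by (rule binomial_gbinomial[symmetric])
  have e3: "nat n choose i = 0" using assms by simp
  show ?thesis unfolding ibinom_def e1 e2 e3 by simp
qed

lemma key:
  assumes VA: "vertex_algebra sV Y vac" and M: "va_module sV Y vac sW YW"
  shows "0 \<le> n \<Longrightarrow> YW (Y u n w') k x \<in> gpos sW YW"
proof -
  from VA obtain N' where N': "\<forall>j\<ge>N'. Y u j w' = 0"
    unfolding vertex_algebra_def by blast
  have vsW: "vector_space sW" using M unfolding va_module_def by blast
  interpret W: module sW using vsW by (simp add: module_iff_vector_space)
  have linL: "\<And>j x. Vector_Spaces.linear sV sW (\<lambda>u. YW u j x)"
    using M unfolding va_module_def by blast
  have linR: "\<And>u j. Vector_Spaces.linear sW sW (YW u j)"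
    using M unfolding va_module_def by blast
  have trW: "\<forall>u w. \<exists>N. \<forall>n\<ge>N. YW u n w = 0"
    using M unfolding va_module_def by blast
  have jac: "jacobi_identity sW Y YW"
    using M unfolding va_module_def by blast
  have Y0: "\<And>j x. YW 0 j x = 0" using lin_facts(1)[OF linL] by simp
  have R0: "\<And>u j. YW u j 0 = 0" using lin_facts(1)[OF linR] by simp
  have main: "\<forall>n k x. 0 \<le> n \<longrightarrow> nat (N' - n) = d \<longrightarrow> YW (Y u n w') k x \<in> gpos sW YW" for d
  proof (induction d rule: less_induct)
    case (less d)
    show ?case
    proof (intro allI impI)
      fix n k x assume n0: "0 \<le> n" and dd: "nat (N' - n) = d"
      show "YW (Y u n w') k x \<in> gpos sW YW"
      proof (cases "N' \<le> n")
        case True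
        then show ?thesis using N' Y0 by (simp add: gpos_def W.span_zero)
      next
        case False
        obtain N where N: "\<forall>j\<ge>N. YW u j x = 0" using trW by blast
        define m where "m = max N 0"
        note J = jac[unfolded jacobi_identity_def, rule_format, where u=u and v=w' and w=x and m=m and n="k - m" and l=n]
        have RHS: "Sum_any (\<lambda>i::nat. sW (of_int ((-1) ^ i * ibinom n i))
            (YW u (m + n - int i) (YW w' (k - m + int i) x)
             - sW (if even n then 1 else -1) (YW w' (k - m + n - int i) (YW u (m + int i) x)))) \<in> gpos sW YW"
          unfolding gpos_def
        proof (rule Sum_any_in_span[OF vsW])
          fix i :: nat
          have "YW u (m + int i) x = 0" using N m_def by simp
          then have e: "YW w' (k - m + n - int i) (YW u (m + int i) x) = 0" using R0 by simp
          show "sW (of_int ((-1) ^ i * ibinom n i))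
            (YW u (m + n - int i) (YW w' (k - m + int i) x)
             - sW (if even n then 1 else -1) (YW w' (k - m + n - int i) (YW u (m + int i) x)))
             \<in> W.span {YW v n w |v n w. 0 \<le> n}"
          proof (cases "int i \<le> n")
            case True
            then have "YW u (m + n - int i) (YW w' (k - m + int i) x) \<in> W.span {YW v n w |v n w. 0 \<le> n}"
            proof (intro W.span_base CollectI exI conjI)
              show "0 \<le> m + n - int i" using True m_def by simp
            qed (rule refl)
            then show ?thesis using e by (simp add: W.span_scale)
          next
            case False
            then show ?thesis using ibinom_big[OF n0, of i] by (simp add: W.span_zero)
          qed
        qed
        define f where "f = (\<lambda>i::nat. sW (of_int (ibinom m i)) (YW (Y u (n + int i) w') (k - int i) x))"
        obtain M' where M': "nat (N' - n) = Suc M'" using False by (metis gr0_implies_Suc zero_less_nat_eq diff_gt_0_iff_gt not_le)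
        have fz: "f i = 0" if "i \<notin> {..<Suc M'}" for i
        proof -
          have "N' \<le> n + int i" using that M' by auto
          then show ?thesis using N' Y0 by (simp add: f_def)
        qed
        have "Sum_any f = sum f {..<Suc M'}"
          by (rule Sum_any.expand_superset) (use fz in auto)
        also have "\<dots> = f 0 + sum (\<lambda>i. f (Suc i)) {..<M'}" by (rule sum.lessThan_Suc_shift)
        finally have S: "Sum_any f = f 0 + sum (\<lambda>i. f (Suc i)) {..<M'}" .
        have "Sum_any f \<in> gpos sW YW" using J RHS by (simp add: f_def)
        moreover have "sum (\<lambda>i. f (Suc i)) {..<M'} \<in> gpos sW YW"
          unfolding gpos_def
        proof (rule W.span_sum)
          fix i assume "i \<in> {..<M'}"
          have lt: "nat (N' - (n + int (Suc i))) < d" using dd False by auto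
          have "YW (Y u (n + int (Suc i)) w') (k - int (Suc i)) x \<in> gpos sW YW"
            using less.IH[OF lt] n0 by simp
          then show "f (Suc i) \<in> W.span {YW v n w |v n w. 0 \<le> n}"
            unfolding f_def gpos_def by (rule W.span_scale)
        qed
        moreover have "f 0 = Sum_any f - sum (\<lambda>i. f (Suc i)) {..<M'}" using S by simp
        ultimately have "f 0 \<in> gpos sW YW" unfolding gpos_def
          by (simp only:) (rule W.span_diff)
        then show ?thesis using vs_zero(3)[OF vsW] by (simp add: f_def)
      qed
    qed
  qed
  assume "0 \<le> n"
  then show ?thesis using main by blast
qed

lemma vac_all:
  assumes VA: "vertex_algebra sV Y vac" and M: "va_module sV Y vac sW YW"
    and v: "vac \<in> gpos sV Y"
  shows "gpos sW YW = UNIV"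
proof -
  have vsV: "vector_space sV" using VA unfolding vertex_algebra_def by blast
  interpret V: module sV using vsV by (simp add: module_iff_vector_space)
  have vsW: "vector_space sW" using M unfolding va_module_def by blast
  interpret W: module sW using vsW by (simp add: module_iff_vector_space)
  have linL: "\<And>j x. Vector_Spaces.linear sV sW (\<lambda>u. YW u j x)"
    using M unfolding va_module_def by blast
  let ?T = "{a. \<forall>k x. YW a k x \<in> gpos sW YW}"
  have sub: "V.subspace ?T"
    unfolding V.subspace_def gpos_def
    using lin_facts[OF linL] W.span_zero W.span_add W.span_scale by auto
  have "{Y v n w |v n w. 0 \<le> n} \<subseteq> ?T" using key[OF VA M] by auto
  then have "gpos sV Y \<subseteq> ?T" using V.span_minimal[OF _ sub] unfolding gpos_def by blast
  with v have "\<And>x. YW vac (-1) x \<in> gpos sW YW" by auto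
  moreover have "\<And>x. YW vac (-1) x = x" using M unfolding va_module_def by auto
  ultimately show ?thesis by auto
qed

lemma va_self:
  assumes "vertex_algebra sV Y vac"
  shows "va_module sV Y vac sV Y"
  using assms unfolding vertex_algebra_def va_module_def by blast

theorem mainTheorem9:
  fixes sV :: "'k::field \<Rightarrow> 'v::ab_group_add \<Rightarrow> 'v"
    and Y :: "'v \<Rightarrow> int \<Rightarrow> 'v \<Rightarrow> 'v"
    and vac :: 'v
  assumes "vertex_algebra sV Y vac"
  shows "((\<exists>(sW :: 'k \<Rightarrow> 'w::ab_group_add \<Rightarrow> 'w) YW.
              va_module sV Y vac sW YW \<and> gpos sW YW \<noteq> UNIV) \<longrightarrow> gpos sV Y \<noteq> UNIV)
       \<and> (gpos sV Y \<noteq> UNIV \<longrightarrow>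
            (\<exists>(sW :: 'k \<Rightarrow> 'v \<Rightarrow> 'v) YW. va_module sV Y vac sW YW \<and> gpos sW YW \<noteq> UNIV))
       \<and> (gpos sV Y \<noteq> UNIV \<longleftrightarrow> vac \<notin> gpos sV Y)"
  using vac_all[OF assms] va_self[OF assms] vac_all[OF assms va_self[OF assms]] by blast

end
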